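(* Let $1<S\le N$, $L$ a band-width vector, $\dot W$ an $L$-admissible matrix, $W_\varepsilon=\mathrm{Id}+\varepsilon\dot W$, $k\in\mathbb N$, $\beta\in\Gamma$, $D_\beta=D_{k,\beta,L}$ and $P_{\varepsilon,\beta}=D_\beta W_\varepsilon$. For all sufficiently small $\varepsilon>0$ let $f^{(1)}_\varepsilon,\dots,f^{(N)}_\varepsilon$ be a unit-norm eigenbasis of $P_{\varepsilon,\beta}$. Then for all $1\le\ell\ne m\le N$ and all sufficiently small $\varepsilon>0$, $\langle f^{(\ell)}_\varepsilon,D_\beta\overline{f^{(m)}_\varepsilon}\rangle=0$.
   Context: A band-width vector is $L=(L_1,\dots,L_S)$ of positive integers with $\sum_sL_s=N$; $N_0=0$, $N_s=N_{s-1}+L_s$, $B_s=\{j:N_{s-1}<j\le N_s\}$. $D_{k,\beta,L}$ is the diagonal matrix with $j$-th entry $e^{-2\pi ik\beta_s}$ for $j\in B_s$. $\dot W$ is $L$-admissible if it is real symmetric and (1) $\dot W_{ij}\ge0$ for $i\ne j$, $\sum_j\dot W_{ij}=0$ for all $i$; (2) $\dot W$ has $N$ distinct eigenvalues; (3) each $\hat W_s=(\dot W_{jk})_{j,k\in B_s}$ has $L_s$ distinct eigenvalues. $\Gamma=\{\beta\in\mathbb R^S: e^{-2\pi ik\beta_{s_1}}\neq e^{-2\pi ik\beta_{s_2}}\text{ for all }k\ne0,\ s_1\ne s_2\}$. $\overline v$ is entrywise conjugation and $\langle v,w\rangle=\sum_jv_j\overline{w_j}$. *)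

theory Defs
  imports Complex_Main
begin

text \<open>Conventions: vectors and matrices of size N are functions on indices 1..N
 (nat => 'a and nat => nat => 'a); blocks are indexed s = 1..S.\<close>

definition band_width :: "nat \<Rightarrow> nat \<Rightarrow> (nat \<Rightarrow> nat) \<Rightarrow> bool" where
  "band_width S N L \<longleftrightarrow> (\<forall>s\<in>{1..S}. 0 < L s) \<and> (\<Sum>s=1..S. L s) = N"

definition Ncum :: "(nat \<Rightarrow> nat) \<Rightarrow> nat \<Rightarrow> nat" where
  "Ncum L s = (\<Sum>t=1..s. L t)"

definition blk :: "(nat \<Rightarrow> nat) \<Rightarrow> nat \<Rightarrow> nat set" where
  "blk L s = {j. Ncum L (s - 1) < j \<and> j \<le> Ncum L s}"

definition is_eigenvalue_on :: "nat set \<Rightarrow> (nat \<Rightarrow> nat \<Rightarrow> 'a::field) \<Rightarrow> 'a \<Rightarrow> bool" where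
  "is_eigenvalue_on I A x \<longleftrightarrow>
     (\<exists>v. (\<exists>j\<in>I. v j \<noteq> 0) \<and> (\<forall>i\<in>I. (\<Sum>j\<in>I. A i j * v j) = x * v i))"

definition admissible :: "nat \<Rightarrow> nat \<Rightarrow> (nat \<Rightarrow> nat) \<Rightarrow> (nat \<Rightarrow> nat \<Rightarrow> real) \<Rightarrow> bool" where
  "admissible S N L Wd \<longleftrightarrow>
     (\<forall>i\<in>{1..N}. \<forall>j\<in>{1..N}. Wd i j = Wd j i) \<and>
     (\<forall>i\<in>{1..N}. \<forall>j\<in>{1..N}. i \<noteq> j \<longrightarrow> 0 \<le> Wd i j) \<and>
     (\<forall>i\<in>{1..N}. (\<Sum>j=1..N. Wd i j) = 0) \<and>
     card {x. is_eigenvalue_on {1..N} Wd x} = N \<and>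
     (\<forall>s\<in>{1..S}. card {x. is_eigenvalue_on (blk L s) Wd x} = L s)"

definition Gamma :: "nat \<Rightarrow> (nat \<Rightarrow> real) set" where
  "Gamma S = {\<beta>. \<forall>k::int. k \<noteq> 0 \<longrightarrow> (\<forall>s1\<in>{1..S}. \<forall>s2\<in>{1..S}. s1 \<noteq> s2 \<longrightarrow>
       exp (- 2 * of_real pi * \<i> * of_int k * of_real (\<beta> s1))
     \<noteq> exp (- 2 * of_real pi * \<i> * of_int k * of_real (\<beta> s2)))}"

definition Ddiag :: "nat \<Rightarrow> nat \<Rightarrow> (nat \<Rightarrow> real) \<Rightarrow> (nat \<Rightarrow> nat) \<Rightarrow> nat \<Rightarrow> complex" where
  "Ddiag S k \<beta> L j =
     (\<Sum>s=1..S. if j \<in> blk L s then exp (- 2 * of_real pi * \<i> * of_nat k * of_real (\<beta> s)) else 0)"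

definition Pmat :: "nat \<Rightarrow> nat \<Rightarrow> (nat \<Rightarrow> real) \<Rightarrow> (nat \<Rightarrow> nat) \<Rightarrow> (nat \<Rightarrow> nat \<Rightarrow> real)
                    \<Rightarrow> real \<Rightarrow> nat \<Rightarrow> nat \<Rightarrow> complex" where
  "Pmat S k \<beta> L Wd \<epsilon> i j =
     Ddiag S k \<beta> L i * of_real ((if i = j then 1 else 0) + \<epsilon> * Wd i j)"

definition unit_eigenbasis :: "nat \<Rightarrow> (nat \<Rightarrow> nat \<Rightarrow> complex) \<Rightarrow> (nat \<Rightarrow> nat \<Rightarrow> complex) \<Rightarrow> bool" where
  "unit_eigenbasis N A f \<longleftrightarrow>
     (\<forall>l\<in>{1..N}. (\<Sum>j=1..N. (cmod (f l j))^2) = 1) \<and>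
     (\<forall>l\<in>{1..N}. \<exists>\<mu>. \<forall>i\<in>{1..N}. (\<Sum>j=1..N. A i j * f l j) = \<mu> * f l i) \<and>
     (\<forall>c. (\<forall>j\<in>{1..N}. (\<Sum>l=1..N. c l * f l j) = 0) \<longrightarrow> (\<forall>l\<in>{1..N}. c l = 0))"

definition cinner :: "nat \<Rightarrow> (nat \<Rightarrow> complex) \<Rightarrow> (nat \<Rightarrow> complex) \<Rightarrow> complex" where
  "cinner N v w = (\<Sum>j=1..N. v j * cnj (w j))"

end

theory Submission
  imports Defs "Jordan_Normal_Form.Determinant"
begin

lemma orth_complete:
  fixes e :: "nat \<Rightarrow> nat \<Rightarrow> real" and C :: "nat set"
  assumes fin: "finite C"
    and orth: "\<forall>i<card C. \<forall>j<card C. (\<Sum>a\<in>C. e i a * e j a) = (if i = j then 1 else 0)"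
  shows "\<forall>a\<in>C. \<forall>b\<in>C. (\<Sum>i<card C. e i a * e i b) = (if a = b then 1 else 0)"
proof -
  let ?n = "card C"
  obtain h where h: "bij_betw h {0..<?n} C" using ex_bij_betw_nat_finite[OF fin] by blast
  define A :: "real mat" where "A = mat ?n ?n (\<lambda>(i,k). e i (h k))"
  have Ac: "A \<in> carrier_mat ?n ?n" unfolding A_def by simp
  have ATc: "transpose_mat A \<in> carrier_mat ?n ?n" unfolding A_def by simp
  have AAT: "A * transpose_mat A = 1\<^sub>m ?n"
  proof (rule eq_matI)
    fix i j assume i: "i < dim_row (1\<^sub>m ?n)" and j: "j < dim_col (1\<^sub>m ?n)"
    have "(A * transpose_mat A) $$ (i,j) = (\<Sum>k<?n. e i (h k) * e j (h k))"
      using i j unfolding A_def by (auto simp add: scalar_prod_def lessThan_atLeast0 intro!: sum.cong)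
    also have "\<dots> = (\<Sum>a\<in>C. e i a * e j a)"
      using sum.reindex_bij_betw[OF h, of "\<lambda>a. e i a * e j a"] by (simp add: lessThan_atLeast0)
    also have "\<dots> = 1\<^sub>m ?n $$ (i,j)" using orth i j by simp
    finally show "(A * transpose_mat A) $$ (i,j) = 1\<^sub>m ?n $$ (i,j)" .
  qed (auto simp: A_def)
  have TA: "transpose_mat A * A = 1\<^sub>m ?n"
    by (rule mat_mult_left_right_inverse[OF Ac ATc AAT])
  show ?thesis
  proof (intro ballI)
    fix a b assume a: "a \<in> C" and b: "b \<in> C"
    obtain k where k: "k < ?n" "h k = a" using h a unfolding bij_betw_def by force
    obtain l where l: "l < ?n" "h l = b" using h b unfolding bij_betw_def by force
    have "(\<Sum>i<?n. e i a * e i b) = (transpose_mat A * A) $$ (k,l)"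
      using k l unfolding A_def by (auto simp add: scalar_prod_def lessThan_atLeast0 intro!: sum.cong)
    also have "\<dots> = (if k = l then 1 else 0)" using TA k l by simp
    also have "\<dots> = (if a = b then 1 else 0)"
      using h k l unfolding bij_betw_def inj_on_def by auto
    finally show "(\<Sum>i<?n. e i a * e i b) = (if a = b then 1 else 0)" .
  qed
qed

lemma spectral:
  fixes W :: "nat \<Rightarrow> nat \<Rightarrow> real" and C :: "nat set"
  assumes fin: "finite C" and sym: "\<forall>a\<in>C. \<forall>b\<in>C. W a b = W b a"
    and card: "card {x. is_eigenvalue_on C W x} = card C"
  shows "\<exists>e lam. (\<forall>i<card C. \<forall>a\<in>C. (\<Sum>b\<in>C. W a b * e i b) = lam i * e i a)
     \<and> (\<forall>i<card C. \<forall>j<card C. i \<noteq> j \<longrightarrow> lam i \<noteq> lam j)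
     \<and> (\<forall>i<card C. \<forall>a\<in>C. \<bar>e i a\<bar> \<le> 1)
     \<and> (\<forall>a\<in>C. \<forall>b\<in>C. (\<Sum>i<card C. e i a * e i b) = (if a = b then 1 else 0))"
proof (cases "card C = 0")
  case True
  then have "C = {}" using fin by simp
  then show ?thesis by simp
next
  case False
  let ?n = "card C"
  let ?L = "{x. is_eigenvalue_on C W x}"
  have finL: "finite ?L" using card False card.infinite by force
  obtain lam where lam: "bij_betw lam {0..<?n} ?L"
    using ex_bij_betw_nat_finite[OF finL] card by auto
  have "\<forall>i. \<exists>v. i < ?n \<longrightarrow> (\<exists>j\<in>C. v j \<noteq> 0) \<and> (\<forall>a\<in>C. (\<Sum>b\<in>C. W a b * v b) = lam i * v a)"
  proof
    fix i
    show "\<exists>v. i < ?n \<longrightarrow> (\<exists>j\<in>C. v j \<noteq> 0) \<and> (\<forall>a\<in>C. (\<Sum>b\<in>C. W a b * v b) = lam i * v a)"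
    proof (cases "i < ?n")
      case True
      then have "lam i \<in> ?L" using lam unfolding bij_betw_def by auto
      then show ?thesis unfolding is_eigenvalue_on_def by auto
    qed auto
  qed
  then obtain v where v: "\<And>i. i < ?n \<Longrightarrow> (\<exists>j\<in>C. v i j \<noteq> 0) \<and> (\<forall>a\<in>C. (\<Sum>b\<in>C. W a b * v i b) = lam i * v i a)"
    by metis
  define sq where "sq i = sqrt (\<Sum>a\<in>C. (v i a)^2)" for i
  define e where "e i a = v i a / sq i" for i a
  have sqpos: "sq i > 0" if ilt: "i < ?n" for i
  proof -
    obtain j where j: "j \<in> C" "v i j \<noteq> 0" using v[OF ilt] by auto
    have "0 < (v i j)^2" using j by simp
    also have "\<dots> \<le> (\<Sum>a\<in>C. (v i a)^2)" using fin j by (intro member_le_sum) auto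
    finally show ?thesis unfolding sq_def by simp
  qed
  have eig: "\<forall>i<?n. \<forall>a\<in>C. (\<Sum>b\<in>C. W a b * e i b) = lam i * e i a"
  proof (intro allI impI ballI)
    fix i a assume i: "i < ?n" and a: "a \<in> C"
    have "(\<Sum>b\<in>C. W a b * e i b) = (\<Sum>b\<in>C. W a b * v i b) / sq i"
      unfolding e_def by (simp add: sum_divide_distrib)
    also have "\<dots> = lam i * e i a" using v[OF i] a unfolding e_def by simp
    finally show "(\<Sum>b\<in>C. W a b * e i b) = lam i * e i a" .
  qed
  have unit: "(\<Sum>a\<in>C. (e i a)^2) = 1" if i: "i < ?n" for i
  proof -
    have "(\<Sum>a\<in>C. (e i a)^2) = (\<Sum>a\<in>C. (v i a)^2) / (sq i)^2"
      unfolding e_def by (simp add: power_divide sum_divide_distrib)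
    also have "(sq i)^2 = (\<Sum>a\<in>C. (v i a)^2)" unfolding sq_def
      by (simp add: sum_nonneg)
    finally show ?thesis using sqpos[OF i] unfolding sq_def by (auto split: if_splits)
  qed
  have bnd: "\<forall>i<?n. \<forall>a\<in>C. \<bar>e i a\<bar> \<le> 1"
  proof (intro allI impI ballI)
    fix i a assume i: "i < ?n" and a: "a \<in> C"
    have "(e i a)^2 \<le> (\<Sum>a\<in>C. (e i a)^2)" using fin a by (intro member_le_sum) auto
    then have "(e i a)^2 \<le> 1" using unit[OF i] by simp
    then show "\<bar>e i a\<bar> \<le> 1" by (simp add: abs_square_le_1)
  qed
  have lamd: "\<forall>i<?n. \<forall>j<?n. i \<noteq> j \<longrightarrow> lam i \<noteq> lam j"
    using lam unfolding bij_betw_def inj_on_def by auto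
  have orth: "\<forall>i<?n. \<forall>j<?n. (\<Sum>a\<in>C. e i a * e j a) = (if i = j then 1 else 0)"
  proof (intro allI impI)
    fix i j assume i: "i < ?n" and j: "j < ?n"
    show "(\<Sum>a\<in>C. e i a * e j a) = (if i = j then 1 else 0)"
    proof (cases "i = j")
      case True then show ?thesis using unit[OF i] by (simp add: power2_eq_square)
    next
      case False
      have "lam i * (\<Sum>a\<in>C. e i a * e j a) = (\<Sum>a\<in>C. (\<Sum>b\<in>C. W a b * e i b) * e j a)"
        using eig i by (simp add: sum_distrib_left mult.assoc)
      also have "\<dots> = (\<Sum>a\<in>C. \<Sum>b\<in>C. W a b * e i b * e j a)"
        by (simp add: sum_distrib_right)
      also have "\<dots> = (\<Sum>b\<in>C. \<Sum>a\<in>C. W a b * e i b * e j a)"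
        by (rule sum.swap)
      also have "\<dots> = (\<Sum>b\<in>C. e i b * (\<Sum>a\<in>C. W b a * e j a))"
        using sym by (auto simp: sum_distrib_left mult.commute mult.left_commute intro!: sum.cong)
      also have "\<dots> = lam j * (\<Sum>a\<in>C. e i a * e j a)"
        using eig j by (simp add: sum_distrib_left mult.commute mult.left_commute)
      finally have "(lam i - lam j) * (\<Sum>a\<in>C. e i a * e j a) = 0"
        by (simp add: algebra_simps)
      then show ?thesis using lamd i j False by simp
    qed
  qed
  show ?thesis
    using eig lamd bnd orth_complete[OF fin orth] by blast
qed


definition Kc :: "nat set \<Rightarrow> (nat \<Rightarrow> nat \<Rightarrow> real) \<Rightarrow> real" where
  "Kc I W = (\<Sum>i\<in>I. \<Sum>j\<in>I. \<bar>W i j\<bar>) + 1"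

definition eigp :: "nat set \<Rightarrow> (nat \<Rightarrow> complex) \<Rightarrow> (nat \<Rightarrow> nat \<Rightarrow> real) \<Rightarrow> real \<Rightarrow> complex
   \<Rightarrow> (nat \<Rightarrow> complex) \<Rightarrow> bool" where
  "eigp I D W \<epsilon> \<mu> v \<longleftrightarrow>
     (\<forall>i\<in>I. D i * (v i + of_real \<epsilon> * (\<Sum>j\<in>I. of_real (W i j) * v j)) = \<mu> * v i)"

lemma Kc_ge1: "Kc I W \<ge> 1"
  unfolding Kc_def by (simp add: sum_nonneg)

lemma rowbound:
  assumes fin: "finite I" and i: "i \<in> I" and J: "J \<subseteq> I" and m: "0 \<le> m"
    and z: "\<forall>j\<in>J. cmod (z j) \<le> m"
  shows "cmod (\<Sum>j\<in>J. of_real (W i j) * z j) \<le> Kc I W * m"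
proof -
  have finJ: "finite J" using fin J finite_subset by auto
  have "cmod (\<Sum>j\<in>J. of_real (W i j) * z j) \<le> (\<Sum>j\<in>J. cmod (of_real (W i j) * z j))"
    by (rule norm_sum)
  also have "\<dots> \<le> (\<Sum>j\<in>J. \<bar>W i j\<bar> * m)"
    using z by (intro sum_mono) (auto simp: norm_mult intro: mult_left_mono)
  also have "\<dots> = (\<Sum>j\<in>J. \<bar>W i j\<bar>) * m" by (simp add: sum_distrib_right)
  also have "\<dots> \<le> (\<Sum>j\<in>I. \<bar>W i j\<bar>) * m"
    using m J fin by (intro mult_right_mono sum_mono2) auto
  also have "(\<Sum>j\<in>I. \<bar>W i j\<bar>) \<le> (\<Sum>i\<in>I. \<Sum>j\<in>I. \<bar>W i j\<bar>)"
    using fin i by (intro member_le_sum) (auto simp: sum_nonneg)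
  then have "(\<Sum>j\<in>I. \<bar>W i j\<bar>) * m \<le> Kc I W * m"
    unfolding Kc_def using m by (intro mult_right_mono) auto
  finally show ?thesis .
qed

lemma eq_bound:
  assumes fin: "finite I" and Du: "\<forall>i\<in>I. cmod (D i) = 1" and e: "eigp I D W \<epsilon> \<mu> v"
    and i: "i \<in> I" and m: "\<forall>j\<in>I. cmod (v j) \<le> m" and eps: "0 \<le> \<epsilon>"
  shows "cmod (D i - \<mu>) * cmod (v i) \<le> \<epsilon> * Kc I W * m"
proof -
  have m0: "0 \<le> m" using m i norm_ge_zero order_trans by blast
  let ?S = "\<Sum>j\<in>I. of_real (W i j) * v j"
  have "D i * (v i + of_real \<epsilon> * ?S) = \<mu> * v i" using e i unfolding eigp_def by auto
  then have "(D i - \<mu>) * v i = - (D i * of_real \<epsilon> * ?S)" by (simp add: algebra_simps)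
  then have "cmod ((D i - \<mu>) * v i) = cmod (D i * of_real \<epsilon> * ?S)" by simp
  then have "cmod (D i - \<mu>) * cmod (v i) = \<epsilon> * cmod ?S"
    using Du i eps by (simp add: norm_mult)
  also have "\<dots> \<le> \<epsilon> * (Kc I W * m)"
    using rowbound[OF fin i subset_refl m0 m] eps by (intro mult_left_mono) auto
  finally show ?thesis by simp
qed

lemma eigp_comb:
  assumes "eigp I D W \<epsilon> \<mu> v" "eigp I D W \<epsilon> \<mu> w"
  shows "eigp I D W \<epsilon> \<mu> (\<lambda>j. q * v j - p * w j)"
  unfolding eigp_def
proof
  fix i assume i: "i \<in> I"
  have v: "D i * (v i + of_real \<epsilon> * (\<Sum>j\<in>I. of_real (W i j) * v j)) = \<mu> * v i"
    and w: "D i * (w i + of_real \<epsilon> * (\<Sum>j\<in>I. of_real (W i j) * w j)) = \<mu> * w i"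
    using assms i unfolding eigp_def by auto
  have s: "(\<Sum>j\<in>I. of_real (W i j) * (q * v j - p * w j))
      = q * (\<Sum>j\<in>I. of_real (W i j) * v j) - p * (\<Sum>j\<in>I. of_real (W i j) * w j)"
    by (simp add: sum_subtractf sum_distrib_left algebra_simps)
  have "D i * (q * v i - p * w i + of_real \<epsilon> * (\<Sum>j\<in>I. of_real (W i j) * (q * v j - p * w j)))
     = q * (D i * (v i + of_real \<epsilon> * (\<Sum>j\<in>I. of_real (W i j) * v j)))
       - p * (D i * (w i + of_real \<epsilon> * (\<Sum>j\<in>I. of_real (W i j) * w j)))"
    unfolding s by (simp add: algebra_simps)
  also have "\<dots> = \<mu> * (q * v i - p * w i)" unfolding v w by (simp add: algebra_simps)
  finally show "D i * (q * v i - p * w i + of_real \<epsilon> * (\<Sum>j\<in>I. of_real (W i j) * (q * v j - p * w j)))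
     = \<mu> * (q * v i - p * w i)" .
qed

lemma core_contra:
  fixes I C :: "nat set" and D z :: "nat \<Rightarrow> complex" and W :: "nat \<Rightarrow> nat \<Rightarrow> real"
    and e :: "nat \<Rightarrow> nat \<Rightarrow> real" and lam :: "nat \<Rightarrow> real"
  assumes fin: "finite I" and Du: "\<forall>i\<in>I. cmod (D i) = 1"
    and sym: "\<forall>a\<in>I. \<forall>b\<in>I. W a b = W b a"
    and Cdef: "C = {i\<in>I. D i = d}" and dunit: "cmod d = 1"
    and eig_e: "\<forall>i<card C. \<forall>a\<in>C. (\<Sum>b\<in>C. W a b * e i b) = lam i * e i a"
    and ebnd: "\<forall>i<card C. \<forall>a\<in>C. \<bar>e i a\<bar> \<le> 1"
    and compl: "\<forall>a\<in>C. \<forall>b\<in>C. (\<Sum>i<card C. e i a * e i b) = (if a = b then 1 else 0)"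
    and gpos: "\<gamma> > 0" and gam: "\<forall>i\<in>I. D i \<noteq> d \<longrightarrow> \<gamma> \<le> cmod (D i - d)"
    and ggpos: "g > 0" and gg: "\<forall>i<card C. \<forall>j<card C. i \<noteq> j \<longrightarrow> g \<le> \<bar>lam i - lam j\<bar>"
    and eps: "0 < \<epsilon>" "\<epsilon> * (4 * Kc I W) \<le> \<gamma>"
      "\<epsilon> * (8 * real (card C) ^ 2 * Kc I W ^ 2) < g * \<gamma>"
    and mu: "cmod (\<mu> - d) \<le> \<epsilon> * Kc I W"
    and i0: "i0 < card C"
      "\<forall>i<card C. cmod (of_real (lam i0) - ((\<mu> / d - 1) / of_real \<epsilon>))
                  \<le> cmod (of_real (lam i) - ((\<mu> / d - 1) / of_real \<epsilon>))"
    and z: "eigp I D W \<epsilon> \<mu> z" "\<exists>j\<in>I. z j \<noteq> 0"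
      "(\<Sum>a\<in>C. of_real (e i0 a) * z a) = 0"
  shows False
proof -
  define n where "n = card C"
  define K where "K = Kc I W"
  define la where "la = (\<mu> / d - 1) / of_real \<epsilon>"
  have K1: "K \<ge> 1" unfolding K_def by (rule Kc_ge1)
  have CI: "C \<subseteq> I" using Cdef by auto
  have finC: "finite C" using fin CI finite_subset by auto
  have d0: "d \<noteq> 0" using dunit by auto
  define m where "m = Max ((\<lambda>j. cmod (z j)) ` I)"
  have Ine: "I \<noteq> {}" using z(2) by auto
  have "m \<in> (\<lambda>j. cmod (z j)) ` I" unfolding m_def using fin Ine by (intro Max_in) auto
  then obtain jm where jm: "jm \<in> I" "cmod (z jm) = m" by auto
  have mmax: "\<forall>j\<in>I. cmod (z j) \<le> m" unfolding m_def using fin by auto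
  have mpos: "m > 0"
  proof -
    obtain j where "j \<in> I" "z j \<noteq> 0" using z(2) by auto
    then show ?thesis using mmax by (meson norm_ge_zero order_less_le_trans zero_less_norm_iff)
  qed
  define B where "B = 2 * \<epsilon> * K * m / \<gamma>"
  have B0: "B \<ge> 0" unfolding B_def using eps gpos mpos K1 by auto
  have out: "cmod (z i) \<le> B" if i: "i \<in> I" "D i \<noteq> d" for i
  proof -
    have "\<gamma> \<le> cmod (D i - d)" using gam i by auto
    also have "\<dots> \<le> cmod (D i - \<mu>) + cmod (\<mu> - d)"
      using norm_triangle_ineq[of "D i - \<mu>" "\<mu> - d"] by simp
    moreover have "\<epsilon> * Kc I W \<le> \<gamma> / 4" using eps(2) by (simp add: algebra_simps)
    ultimately have "\<gamma> / 2 \<le> cmod (D i - \<mu>)" using mu gpos by linarith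
    then have "\<gamma> / 2 * cmod (z i) \<le> cmod (D i - \<mu>) * cmod (z i)"
      by (intro mult_right_mono) auto
    also have "\<dots> \<le> \<epsilon> * K * m" unfolding K_def
      using eq_bound[OF fin Du z(1) i(1) mmax] eps by auto
    finally show ?thesis unfolding B_def using gpos by (simp add: field_simps)
  qed
  define \<rho> where "\<rho> a = (\<Sum>j\<in>I - C. of_real (W a j) * z j)" for a
  have rho: "cmod (\<rho> a) \<le> K * B" if a: "a \<in> I" for a
    unfolding \<rho>_def K_def
    by (rule rowbound[OF fin a _ B0]) (use out Cdef in auto)
  have ceq: "(\<Sum>b\<in>C. of_real (W a b) * z b) = la * z a - \<rho> a" if a: "a \<in> C" for a
  proof -
    have aI: "a \<in> I" and Da: "D a = d" using a Cdef by auto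
    let ?S = "\<Sum>j\<in>I. of_real (W a j) * z j"
    have "d * (z a + of_real \<epsilon> * ?S) = \<mu> * z a" using z(1) aI Da unfolding eigp_def by auto
    then have "?S = la * z a" unfolding la_def using d0 eps
      by (simp add: field_simps)
    moreover have "?S = (\<Sum>b\<in>C. of_real (W a b) * z b) + \<rho> a"
      unfolding \<rho>_def using sum.subset_diff[OF CI fin] by (simp add: add.commute)
    ultimately show ?thesis by (simp add: algebra_simps)
  qed
  define c where "c i = (\<Sum>a\<in>C. of_real (e i a) * z a)" for i
  have eig_c: "(\<Sum>b\<in>C. complex_of_real (W a b) * of_real (e i b)) = of_real (lam i) * of_real (e i a)"
    if i: "i < n" and a: "a \<in> C" for i a
  proof -
    have "(\<Sum>b\<in>C. W a b * e i b) = lam i * e i a" using eig_e i a unfolding n_def by auto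
    then have "complex_of_real (\<Sum>b\<in>C. W a b * e i b) = of_real (lam i * e i a)" by simp
    then show ?thesis by simp
  qed
  have cbound0: "cmod ((of_real (lam i) - la) * c i) \<le> real n * (K * B)" if i: "i < n" for i
  proof -
    have "(\<Sum>a\<in>C. of_real (e i a) * (\<Sum>b\<in>C. of_real (W a b) * z b))
        = (\<Sum>a\<in>C. \<Sum>b\<in>C. of_real (e i a) * of_real (W a b) * z b)"
      by (simp add: sum_distrib_left mult.assoc)
    also have "\<dots> = (\<Sum>b\<in>C. \<Sum>a\<in>C. of_real (e i a) * of_real (W a b) * z b)"
      by (rule sum.swap)
    also have "\<dots> = (\<Sum>b\<in>C. (\<Sum>a\<in>C. complex_of_real (W b a) * of_real (e i a)) * z b)"
    proof (rule sum.cong[OF refl])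
      fix b assume b: "b \<in> C"
      have "(\<Sum>a\<in>C. of_real (e i a) * of_real (W a b) * z b)
          = (\<Sum>a\<in>C. complex_of_real (W b a) * of_real (e i a)) * z b"
        unfolding sum_distrib_right
        using sym CI b by (intro sum.cong) (auto simp: mult.commute subsetD)
      then show "(\<Sum>a\<in>C. of_real (e i a) * of_real (W a b) * z b)
          = (\<Sum>a\<in>C. complex_of_real (W b a) * of_real (e i a)) * z b" .
    qed
    also have "\<dots> = (\<Sum>b\<in>C. of_real (lam i) * of_real (e i b) * z b)"
      using eig_c[OF i] by simp
    also have "\<dots> = of_real (lam i) * c i" unfolding c_def
      by (simp add: sum_distrib_left mult.assoc)
    finally have l1: "(\<Sum>a\<in>C. of_real (e i a) * (\<Sum>b\<in>C. of_real (W a b) * z b)) = of_real (lam i) * c i" .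
    have "(\<Sum>a\<in>C. of_real (e i a) * (\<Sum>b\<in>C. of_real (W a b) * z b))
        = (\<Sum>a\<in>C. of_real (e i a) * (la * z a - \<rho> a))"
      using ceq by simp
    also have "\<dots> = la * c i - (\<Sum>a\<in>C. of_real (e i a) * \<rho> a)"
      unfolding c_def by (simp add: algebra_simps sum_subtractf sum_distrib_left)
    finally have "(of_real (lam i) - la) * c i = - (\<Sum>a\<in>C. of_real (e i a) * \<rho> a)"
      using l1 by (simp add: algebra_simps)
    then have "cmod ((of_real (lam i) - la) * c i) = cmod (\<Sum>a\<in>C. of_real (e i a) * \<rho> a)"
      by simp
    also have "\<dots> \<le> (\<Sum>a\<in>C. cmod (of_real (e i a) * \<rho> a))" by (rule norm_sum)
    also have "\<dots> \<le> (\<Sum>a\<in>C. K * B)"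
    proof (rule sum_mono)
      fix a assume a: "a \<in> C"
      have "cmod (of_real (e i a) * \<rho> a) = \<bar>e i a\<bar> * cmod (\<rho> a)" by (simp add: norm_mult)
      also have "\<dots> \<le> 1 * (K * B)"
        using ebnd i a rho[of a] CI unfolding n_def by (intro mult_mono) auto
      finally show "cmod (of_real (e i a) * \<rho> a) \<le> K * B" by simp
    qed
    also have "\<dots> = real n * (K * B)" unfolding n_def by simp
    finally show ?thesis .
  qed
  have cbound: "cmod (c i) \<le> 2 * real n * K * B / g" if i: "i < n" for i
  proof (cases "i = i0")
    case True
    then show ?thesis using z(3) B0 K1 ggpos unfolding c_def by simp
  next
    case False
    have "g \<le> \<bar>lam i - lam i0\<bar>" using gg i i0(1) False unfolding n_def by auto
    also have "\<dots> = cmod (of_real (lam i) - of_real (lam i0) :: complex)"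
      by (metis norm_of_real of_real_diff)
    also have "\<dots> \<le> cmod (of_real (lam i) - la) + cmod (of_real (lam i0) - la)"
      using norm_triangle_ineq[of "of_real (lam i) - la" "la - of_real (lam i0)"]
      by (simp add: norm_minus_commute)
    also have "cmod (of_real (lam i0) - la) \<le> cmod (of_real (lam i) - la)"
      using i0(2) i unfolding la_def n_def by auto
    finally have gl: "g / 2 \<le> cmod (of_real (lam i) - la)" by simp
    have "g / 2 * cmod (c i) \<le> cmod (of_real (lam i) - la) * cmod (c i)"
      using gl by (intro mult_right_mono) auto
    also have "\<dots> \<le> real n * (K * B)" using cbound0[OF i] by (simp add: norm_mult)
    finally show ?thesis using ggpos by (simp add: field_simps)
  qed
  have zin: "cmod (z a) \<le> real n * (2 * real n * K * B / g)" if a: "a \<in> C" for a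
  proof -
    have "(\<Sum>i<n. c i * of_real (e i a)) = (\<Sum>i<n. \<Sum>b\<in>C. of_real (e i b * e i a) * z b)"
      unfolding c_def sum_distrib_right by (simp add: mult.commute mult.left_commute)
    also have "\<dots> = (\<Sum>b\<in>C. \<Sum>i<n. of_real (e i b * e i a) * z b)" by (rule sum.swap)
    also have "\<dots> = (\<Sum>b\<in>C. of_real (\<Sum>i<n. e i b * e i a) * z b)"
      by (simp add: sum_distrib_right)
    also have "\<dots> = (\<Sum>b\<in>C. (if b = a then z b else 0))"
      using compl a unfolding n_def by (intro sum.cong) auto
    also have "\<dots> = z a" using finC a by simp
    finally have za: "z a = (\<Sum>i<n. c i * of_real (e i a))" by simp
    have "cmod (z a) \<le> (\<Sum>i<n. cmod (c i * of_real (e i a)))" unfolding za by (rule norm_sum)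
    also have "\<dots> \<le> (\<Sum>i<n. 2 * real n * K * B / g)"
    proof (rule sum_mono)
      fix i assume i: "i \<in> {..<n}"
      have "cmod (c i * of_real (e i a)) = cmod (c i) * \<bar>e i a\<bar>" by (simp add: norm_mult)
      also have "\<dots> \<le> (2 * real n * K * B / g) * 1"
        using cbound[of i] ebnd i a B0 K1 ggpos unfolding n_def by (intro mult_mono) auto
      finally show "cmod (c i * of_real (e i a)) \<le> 2 * real n * K * B / g" by simp
    qed
    also have "\<dots> = real n * (2 * real n * K * B / g)" by simp
    finally show ?thesis .
  qed
  show False
  proof (cases "D jm = d")
    case False
    have "m \<le> B" using out[OF jm(1) False] jm(2) by simp
    also have "B \<le> m / 2" unfolding B_def using eps(2) gpos mpos K1 unfolding K_def
      by (simp add: field_simps)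
    finally show False using mpos by simp
  next
    case True
    then have "jm \<in> C" using Cdef jm by auto
    then have "m \<le> real n * (2 * real n * K * B / g)" using zin jm(2) by auto
    also have "\<dots> = \<epsilon> * (4 * real n ^ 2 * K ^ 2) * m / (g * \<gamma>)"
      unfolding B_def by (simp add: field_simps power2_eq_square)
    also have "\<dots> < m / 2"
    proof -
      have "\<epsilon> * (4 * real n ^ 2 * K ^ 2) * 2 < g * \<gamma>" using eps(3) unfolding n_def K_def by simp
      then have "\<epsilon> * (4 * real n ^ 2 * K ^ 2) * m * 2 < g * \<gamma> * m" using mpos
        by (metis mult.commute mult.left_commute mult_less_cancel_left_pos)
      then show ?thesis using ggpos gpos by (simp add: field_simps)
    qed
    finally show False using mpos by simp
  qed
qed

lemma cluster_ev:
  fixes I :: "nat set" and D :: "nat \<Rightarrow> complex" and W :: "nat \<Rightarrow> nat \<Rightarrow> real"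
  assumes fin: "finite I" and Du: "\<forall>i\<in>I. cmod (D i) = 1"
    and sym: "\<forall>a\<in>I. \<forall>b\<in>I. W a b = W b a"
    and dI: "d \<in> D ` I" and Cdef: "C = {i\<in>I. D i = d}"
    and card: "card {x. is_eigenvalue_on C W x} = card C"
  shows "eventually (\<lambda>\<epsilon>. \<forall>\<mu> v w. eigp I D W \<epsilon> \<mu> v \<longrightarrow> eigp I D W \<epsilon> \<mu> w \<longrightarrow>
            (\<exists>j\<in>I. v j \<noteq> 0) \<longrightarrow> cmod (\<mu> - d) \<le> \<epsilon> * Kc I W \<longrightarrow>
            (\<exists>a. \<forall>i\<in>I. w i = a * v i)) (at_right 0)"
proof -
  have CI: "C \<subseteq> I" using Cdef by auto
  have finC: "finite C" using fin CI finite_subset by auto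
  have symC: "\<forall>a\<in>C. \<forall>b\<in>C. W a b = W b a" using sym CI by auto
  obtain e lam where
    eig_e: "\<forall>i<card C. \<forall>a\<in>C. (\<Sum>b\<in>C. W a b * e i b) = lam i * e i a"
    and lamd: "\<forall>i<card C. \<forall>j<card C. i \<noteq> j \<longrightarrow> lam i \<noteq> lam j"
    and ebnd: "\<forall>i<card C. \<forall>a\<in>C. \<bar>e i a\<bar> \<le> 1"
    and compl: "\<forall>a\<in>C. \<forall>b\<in>C. (\<Sum>i<card C. e i a * e i b) = (if a = b then 1 else 0)"
    using spectral[OF finC symC card] by blast
  define n where "n = card C"
  have Cne: "C \<noteq> {}" using dI Cdef by auto
  have npos: "n > 0" unfolding n_def using finC Cne by auto
  define K where "K = Kc I W"
  have K1: "K \<ge> 1" unfolding K_def by (rule Kc_ge1)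
  have dunit: "cmod d = 1" using dI Du by auto
  define G where "G = (\<lambda>i. cmod (D i - d)) ` {i\<in>I. D i \<noteq> d}"
  define \<gamma> where "\<gamma> = Min (insert 1 G)"
  have finG: "finite G" unfolding G_def using fin by auto
  have gpos: "\<gamma> > 0" unfolding \<gamma>_def using finG by (auto simp: G_def)
  have gam: "\<forall>i\<in>I. D i \<noteq> d \<longrightarrow> \<gamma> \<le> cmod (D i - d)"
    unfolding \<gamma>_def G_def using finG G_def by (auto intro!: Min_le)
  define H where "H = (\<lambda>(i,j). \<bar>lam i - lam j\<bar>) ` {(i,j). i < n \<and> j < n \<and> i \<noteq> j}"
  define g where "g = Min (insert 1 H)"
  have finH: "finite H" unfolding H_def
    by (rule finite_imageI, rule finite_subset[of _ "{..<n} \<times> {..<n}"]) auto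
  have ggpos: "g > 0" unfolding g_def using finH lamd by (auto simp: H_def n_def)
  have gg: "\<forall>i<card C. \<forall>j<card C. i \<noteq> j \<longrightarrow> g \<le> \<bar>lam i - lam j\<bar>"
  proof (intro allI impI)
    fix i j assume "i < card C" "j < card C" "i \<noteq> j"
    then have "\<bar>lam i - lam j\<bar> \<in> H" unfolding H_def n_def by force
    then show "g \<le> \<bar>lam i - lam j\<bar>" unfolding g_def using finH by auto
  qed
  define \<delta> where "\<delta> = min (\<gamma> / (4 * K)) (g * \<gamma> / (16 * real n ^ 2 * K ^ 2))"
  have dpos: "\<delta> > 0" unfolding \<delta>_def using gpos ggpos K1 npos by auto
  show ?thesis
  proof (rule eventually_mono[OF eventually_at_right_real[OF dpos]], intro allI impI)
    fix \<epsilon> \<mu> v w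
    assume epsI: "\<epsilon> \<in> {0<..<\<delta>}" and ev: "eigp I D W \<epsilon> \<mu> v" and ew: "eigp I D W \<epsilon> \<mu> w"
      and vnz: "\<exists>j\<in>I. v j \<noteq> 0" and mu: "cmod (\<mu> - d) \<le> \<epsilon> * Kc I W"
    have eps0: "0 < \<epsilon>" using epsI by auto
    have e1: "\<epsilon> * (4 * Kc I W) \<le> \<gamma>"
    proof -
      have "\<epsilon> \<le> \<gamma> / (4 * K)" using epsI unfolding \<delta>_def by auto
      then show ?thesis using K1 unfolding K_def by (simp add: field_simps)
    qed
    have e2: "\<epsilon> * (8 * real (card C) ^ 2 * Kc I W ^ 2) < g * \<gamma>"
    proof -
      have "\<epsilon> < g * \<gamma> / (16 * real n ^ 2 * K ^ 2)" using epsI unfolding \<delta>_def by auto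
      then have "\<epsilon> * (16 * real n ^ 2 * K ^ 2) < g * \<gamma>" using K1 npos by (simp add: field_simps)
      moreover have "\<epsilon> * (8 * real n ^ 2 * K ^ 2) \<le> \<epsilon> * (16 * real n ^ 2 * K ^ 2)"
        using eps0 by (intro mult_left_mono) auto
      ultimately show ?thesis unfolding n_def K_def by linarith
    qed
    define la where "la = (\<mu> / d - 1) / complex_of_real \<epsilon>"
    define M where "M = Min ((\<lambda>i. cmod (of_real (lam i) - la)) ` {..<n})"
    have "M \<in> (\<lambda>i. cmod (of_real (lam i) - la)) ` {..<n}"
      unfolding M_def using npos by (intro Min_in) auto
    then obtain i0 where i0: "i0 < n" "cmod (of_real (lam i0) - la) = M" by auto
    have i0min: "\<forall>i<card C. cmod (of_real (lam i0) - la) \<le> cmod (of_real (lam i) - la)"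
      using i0(2) unfolding M_def n_def by auto
    note cc = core_contra[OF fin Du sym Cdef dunit eig_e ebnd compl gpos gam ggpos gg eps0 e1 e2 mu]
    show "\<exists>a. \<forall>i\<in>I. w i = a * v i"
    proof (rule ccontr)
      assume nd: "\<not> (\<exists>a. \<forall>i\<in>I. w i = a * v i)"
      define p where "p = (\<Sum>a\<in>C. of_real (e i0 a) * v a)"
      define q where "q = (\<Sum>a\<in>C. of_real (e i0 a) * w a)"
      show False
      proof (cases "p = 0")
        case True
        show False using cc[of i0 v] i0(1) i0min ev vnz True unfolding la_def p_def n_def by auto
      next
        case False
        let ?z = "\<lambda>j. q * v j - p * w j"
        have ez: "eigp I D W \<epsilon> \<mu> ?z" by (rule eigp_comb[OF ev ew])
        have znz: "\<exists>j\<in>I. ?z j \<noteq> 0"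
        proof (rule ccontr)
          assume "\<not> (\<exists>j\<in>I. ?z j \<noteq> 0)"
          then have "\<forall>i\<in>I. w i = (q / p) * v i" using False by (auto simp: field_simps)
          then show False using nd by blast
        qed
        have "(\<Sum>a\<in>C. of_real (e i0 a) * ?z a)
           = q * (\<Sum>a\<in>C. of_real (e i0 a) * v a) - p * (\<Sum>a\<in>C. of_real (e i0 a) * w a)"
          by (simp add: algebra_simps sum_subtractf sum_distrib_left)
        then have zp: "(\<Sum>a\<in>C. of_real (e i0 a) * ?z a) = 0"
          by (simp add: p_def[symmetric] q_def[symmetric])
        show False using cc[of i0 ?z] i0(1) i0min ez znz zp unfolding la_def n_def by auto
      qed
    qed
  qed
qed


lemma biorth:
  fixes D x y :: "nat \<Rightarrow> complex" and W :: "nat \<Rightarrow> nat \<Rightarrow> real"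
  assumes fin: "finite I" and Du: "\<forall>i\<in>I. cmod (D i) = 1"
    and sym: "\<forall>a\<in>I. \<forall>b\<in>I. W a b = W b a"
    and ex: "eigp I D W \<epsilon> \<mu>1 x" and ey: "eigp I D W \<epsilon> \<mu>2 y" and ne: "\<mu>1 \<noteq> \<mu>2"
  shows "(\<Sum>j\<in>I. x j * cnj (D j * cnj (y j))) = 0"
proof -
  have DD: "cnj (D j) * D j = 1" if "j \<in> I" for j
  proof -
    have "D j * cnj (D j) = of_real ((cmod (D j))^2)" by (rule complex_norm_square[symmetric])
    then show ?thesis using Du that by (simp add: mult.commute)
  qed
  define Q where "Q = (\<Sum>j\<in>I. x j * cnj (D j * cnj (y j)))"
  have Q: "Q = (\<Sum>j\<in>I. x j * cnj (D j) * y j)" unfolding Q_def by (simp add: mult.assoc)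
  define T where "T = (\<Sum>j\<in>I. x j * y j) + of_real \<epsilon> * (\<Sum>j\<in>I. \<Sum>i\<in>I. of_real (W j i) * x i * y j)"
  have "\<mu>1 * Q = (\<Sum>j\<in>I. (\<mu>1 * x j) * cnj (D j) * y j)" unfolding Q
    by (simp add: sum_distrib_left mult.assoc)
  also have "\<dots> = (\<Sum>j\<in>I. (D j * (x j + of_real \<epsilon> * (\<Sum>i\<in>I. of_real (W j i) * x i))) * cnj (D j) * y j)"
    using ex unfolding eigp_def by (intro sum.cong) auto
  also have "\<dots> = (\<Sum>j\<in>I. (x j + of_real \<epsilon> * (\<Sum>i\<in>I. of_real (W j i) * x i)) * y j)"
  proof (rule sum.cong[OF refl])
    fix j assume j: "j \<in> I"
    have "(D j * (x j + of_real \<epsilon> * (\<Sum>i\<in>I. of_real (W j i) * x i))) * cnj (D j) * y j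
       = (cnj (D j) * D j) * ((x j + of_real \<epsilon> * (\<Sum>i\<in>I. of_real (W j i) * x i)) * y j)"
      by (simp add: algebra_simps)
    then show "(D j * (x j + of_real \<epsilon> * (\<Sum>i\<in>I. of_real (W j i) * x i))) * cnj (D j) * y j
       = (x j + of_real \<epsilon> * (\<Sum>i\<in>I. of_real (W j i) * x i)) * y j" using DD[OF j] by simp
  qed
  also have "\<dots> = T" unfolding T_def
    by (simp add: algebra_simps sum.distrib sum_distrib_left sum_distrib_right)
  finally have 1: "\<mu>1 * Q = T" .
  have "\<mu>2 * Q = (\<Sum>j\<in>I. x j * cnj (D j) * (\<mu>2 * y j))" unfolding Q
    by (simp add: sum_distrib_left algebra_simps)
  also have "\<dots> = (\<Sum>j\<in>I. x j * cnj (D j) * (D j * (y j + of_real \<epsilon> * (\<Sum>i\<in>I. of_real (W j i) * y i))))"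
    using ey unfolding eigp_def by (intro sum.cong) auto
  also have "\<dots> = (\<Sum>j\<in>I. x j * (y j + of_real \<epsilon> * (\<Sum>i\<in>I. of_real (W j i) * y i)))"
  proof (rule sum.cong[OF refl])
    fix j assume j: "j \<in> I"
    have "x j * cnj (D j) * (D j * (y j + of_real \<epsilon> * (\<Sum>i\<in>I. of_real (W j i) * y i)))
       = (cnj (D j) * D j) * (x j * (y j + of_real \<epsilon> * (\<Sum>i\<in>I. of_real (W j i) * y i)))"
      by (simp add: algebra_simps)
    then show "x j * cnj (D j) * (D j * (y j + of_real \<epsilon> * (\<Sum>i\<in>I. of_real (W j i) * y i)))
       = x j * (y j + of_real \<epsilon> * (\<Sum>i\<in>I. of_real (W j i) * y i))" using DD[OF j] by simp
  qed
  also have "\<dots> = (\<Sum>j\<in>I. x j * y j) + of_real \<epsilon> * (\<Sum>j\<in>I. \<Sum>i\<in>I. of_real (W j i) * x j * y i)"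
    by (simp add: algebra_simps sum.distrib sum_distrib_left sum_distrib_right)
  also have "(\<Sum>j\<in>I. \<Sum>i\<in>I. of_real (W j i) * x j * y i) = (\<Sum>i\<in>I. \<Sum>j\<in>I. of_real (W j i) * x j * y i)"
    by (rule sum.swap)
  also have "\<dots> = (\<Sum>j\<in>I. \<Sum>i\<in>I. of_real (W j i) * x i * y j)"
    using sym by (intro sum.cong refl) auto
  finally have 2: "\<mu>2 * Q = T" unfolding T_def .
  from 1 2 have "(\<mu>1 - \<mu>2) * Q = 0" by (simp add: algebra_simps)
  then show ?thesis using ne unfolding Q_def by simp
qed


lemma Ncum_0[simp]: "Ncum L 0 = 0" unfolding Ncum_def by simp

lemma Ncum_mono: "s \<le> t \<Longrightarrow> Ncum L s \<le> Ncum L t"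
  unfolding Ncum_def by (intro sum_mono2) auto

lemma Ncum_Suc: "Ncum L (Suc s) = Ncum L s + L (Suc s)"
  unfolding Ncum_def by simp

lemma blk_ex:
  assumes bw: "band_width S N L" and j: "j \<in> {1..N}"
  shows "\<exists>s\<in>{1..S}. j \<in> blk L s"
proof -
  have NS: "Ncum L S = N" using bw unfolding band_width_def Ncum_def by simp
  define s where "s = (LEAST s. j \<le> Ncum L s)"
  have js: "j \<le> Ncum L s" unfolding s_def by (rule LeastI[of _ S]) (use j NS in auto)
  have sS: "s \<le> S" unfolding s_def by (rule Least_le) (use j NS in auto)
  have s0: "s \<noteq> 0" using js j by (cases "s = 0") auto
  have "\<not> j \<le> Ncum L (s - 1)" unfolding s_def
    by (rule not_less_Least) (use s0 s_def in auto)
  then have "s \<in> {1..S} \<and> j \<in> blk L s" using js sS s0 unfolding blk_def by auto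
  then show ?thesis by blast
qed

lemma blk_uniq:
  assumes "j \<in> blk L s" "j \<in> blk L t" "1 \<le> s" "1 \<le> t"
  shows "s = t"
proof (rule ccontr)
  assume "s \<noteq> t"
  then consider "s < t" | "t < s" by linarith
  then show False
  proof cases
    case 1
    then have "Ncum L s \<le> Ncum L (t - 1)" by (intro Ncum_mono) auto
    then show False using assms unfolding blk_def by auto
  next
    case 2
    then have "Ncum L t \<le> Ncum L (s - 1)" by (intro Ncum_mono) auto
    then show False using assms unfolding blk_def by auto
  qed
qed

lemma blk_sub:
  assumes bw: "band_width S N L" and s: "s \<in> {1..S}"
  shows "blk L s \<subseteq> {1..N}"
proof -
  have NS: "Ncum L S = N" using bw unfolding band_width_def Ncum_def by simp
  have "Ncum L s \<le> Ncum L S" using s by (intro Ncum_mono) auto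
  then show ?thesis using NS unfolding blk_def by auto
qed

lemma card_blk:
  assumes "1 \<le> s" shows "card (blk L s) = L s"
proof -
  obtain r where r: "s = Suc r" using assms by (cases s) auto
  have "blk L s = {Ncum L r <.. Ncum L r + L s}"
    unfolding blk_def r by (auto simp: Ncum_Suc)
  then show ?thesis by simp
qed

definition Eb :: "nat \<Rightarrow> (nat \<Rightarrow> real) \<Rightarrow> nat \<Rightarrow> complex" where
  "Eb k \<beta> s = exp (- 2 * of_real pi * \<i> * of_nat k * of_real (\<beta> s))"

lemma Eb_norm: "cmod (Eb k \<beta> s) = 1"
  unfolding Eb_def by (simp add: norm_exp_eq_Re)

lemma Ddiag_blk:
  assumes s: "s \<in> {1..S}" and j: "j \<in> blk L s"
  shows "Ddiag S k \<beta> L j = Eb k \<beta> s"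
proof -
  have "Ddiag S k \<beta> L j = (\<Sum>t=1..S. if t = s then Eb k \<beta> t else 0)"
    unfolding Ddiag_def Eb_def
  proof (rule sum.cong[OF refl])
    fix t assume t: "t \<in> {1..S}"
    have "j \<in> blk L t \<longleftrightarrow> t = s"
    proof
      assume "j \<in> blk L t" then show "t = s" using blk_uniq[of j L t s] s j t by auto
    qed (use j in simp)
    then show "(if j \<in> blk L t then exp (- 2 * complex_of_real pi * \<i> * of_nat k * of_real (\<beta> t)) else 0) =
         (if t = s then exp (- 2 * complex_of_real pi * \<i> * of_nat k * of_real (\<beta> t)) else 0)"
      by simp
  qed
  also have "\<dots> = Eb k \<beta> s" using s by simp
  finally show ?thesis .
qed


lemma pmat_eigp:
  assumes "\<forall>i\<in>{1..N}. (\<Sum>j=1..N. Pmat S k \<beta> L Wd \<epsilon> i j * v j) = \<mu> * v i"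
  shows "eigp {1..N} (Ddiag S k \<beta> L) Wd \<epsilon> \<mu> v"
  unfolding eigp_def
proof
  fix i assume i: "i \<in> {1..N}"
  have "(\<Sum>j=1..N. Pmat S k \<beta> L Wd \<epsilon> i j * v j)
     = Ddiag S k \<beta> L i * ((\<Sum>j=1..N. (if i = j then v j else 0)) + of_real \<epsilon> * (\<Sum>j=1..N. of_real (Wd i j) * v j))"
  proof -
    have "(\<Sum>j=1..N. Pmat S k \<beta> L Wd \<epsilon> i j * v j)
        = (\<Sum>j=1..N. Ddiag S k \<beta> L i * ((if i = j then v j else 0) + of_real \<epsilon> * (of_real (Wd i j) * v j)))"
      unfolding Pmat_def by (intro sum.cong refl) (simp add: algebra_simps)
    also have "\<dots> = Ddiag S k \<beta> L i * ((\<Sum>j=1..N. (if i = j then v j else 0)) + of_real \<epsilon> * (\<Sum>j=1..N. of_real (Wd i j) * v j))"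
      by (simp only: distrib_left sum.distrib sum_distrib_left)
    finally show ?thesis .
  qed
  also have "(\<Sum>j=1..N. (if i = j then v j else 0)) = v i" using i by simp
  finally show "Ddiag S k \<beta> L i * (v i + of_real \<epsilon> * (\<Sum>j\<in>{1..N}. of_real (Wd i j) * v j)) = \<mu> * v i"
    using assms i by simp
qed

theorem lemma4p3:
  fixes S N k :: nat and L :: "nat \<Rightarrow> nat" and Wd :: "nat \<Rightarrow> nat \<Rightarrow> real"
    and \<beta> :: "nat \<Rightarrow> real" and f :: "real \<Rightarrow> nat \<Rightarrow> nat \<Rightarrow> complex"
  assumes "1 < S" and "S \<le> N"
    and "band_width S N L"
    and "admissible S N L Wd"
    and "\<beta> \<in> Gamma S"
    and "eventually (\<lambda>\<epsilon>. unit_eigenbasis N (Pmat S k \<beta> L Wd \<epsilon>) (f \<epsilon>)) (at_right 0)"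
  shows "\<forall>l\<in>{1..N}. \<forall>m\<in>{1..N}. l \<noteq> m \<longrightarrow>
           eventually (\<lambda>\<epsilon>. cinner N (f \<epsilon> l) (\<lambda>j. Ddiag S k \<beta> L j * cnj (f \<epsilon> m j)) = 0)
             (at_right 0)"
proof (intro ballI impI)
  fix l m assume l: "l \<in> {1..N}" and m: "m \<in> {1..N}" and lm: "l \<noteq> m"
  note bw = assms(3) and adm = assms(4) and gam = assms(5)
  define I where "I = {1..N}"
  define D where "D = Ddiag S k \<beta> L"
  have fin: "finite I" unfolding I_def by simp
  have Du: "\<forall>i\<in>I. cmod (D i) = 1"
  proof
    fix i assume "i \<in> I"
    then obtain s where s: "s \<in> {1..S}" "i \<in> blk L s" using blk_ex[OF bw] unfolding I_def by blast
    show "cmod (D i) = 1" unfolding D_def using Ddiag_blk[OF s] Eb_norm by simp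
  qed
  note A = adm[unfolded admissible_def]
  have sym: "\<forall>a\<in>I. \<forall>b\<in>I. Wd a b = Wd b a" using A[THEN conjunct1] unfolding I_def .
  have A4: "card {x. is_eigenvalue_on {1..N} Wd x} = N"
    using A[THEN conjunct2, THEN conjunct2, THEN conjunct2, THEN conjunct1] .
  have A5: "\<forall>s\<in>{1..S}. card {x. is_eigenvalue_on (blk L s) Wd x} = L s"
    using A[THEN conjunct2, THEN conjunct2, THEN conjunct2, THEN conjunct2] .
  have clus: "card {x. is_eigenvalue_on {i\<in>I. D i = d} Wd x} = card {i\<in>I. D i = d}"
    if d: "d \<in> D ` I" for d
  proof -
    obtain i1 where i1: "i1 \<in> I" "d = D i1" using d by auto
    obtain s1 where s1: "s1 \<in> {1..S}" "i1 \<in> blk L s1" using blk_ex[OF bw] i1 unfolding I_def by blast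
    have ds: "d = Eb k \<beta> s1" using i1(2) Ddiag_blk[OF s1] unfolding D_def by simp
    show ?thesis
    proof (cases "k = 0")
      case True
      have "D i = d" if iI: "i \<in> I" for i
      proof -
        obtain s where s: "s \<in> {1..S}" "i \<in> blk L s" using blk_ex[OF bw] iI unfolding I_def by blast
        then have "D i = Eb k \<beta> s" unfolding D_def using Ddiag_blk[OF s] by simp
        then show ?thesis using ds True unfolding Eb_def by simp
      qed
      then have "{i\<in>I. D i = d} = I" by blast
      then have "{i\<in>I. D i = d} = {1..N}" unfolding I_def .
      then show ?thesis using A4 by simp
    next
      case False
      have "{i\<in>I. D i = d} = blk L s1"
      proof
        show "{i\<in>I. D i = d} \<subseteq> blk L s1"
        proof
          fix i assume "i \<in> {i\<in>I. D i = d}"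
          then have iI: "i \<in> I" and Di: "D i = d" by auto
          obtain t where t: "t \<in> {1..S}" "i \<in> blk L t" using blk_ex[OF bw] iI unfolding I_def by blast
          have "Eb k \<beta> t = Eb k \<beta> s1" using Di ds Ddiag_blk[OF t] unfolding D_def by simp
          moreover have g1: "\<forall>s1\<in>{1..S}. \<forall>s2\<in>{1..S}. s1 \<noteq> s2 \<longrightarrow>
              exp (- 2 * of_real pi * \<i> * of_int (int k) * of_real (\<beta> s1))
              \<noteq> exp (- 2 * of_real pi * \<i> * of_int (int k) * of_real (\<beta> s2))"
            using gam[unfolded Gamma_def mem_Collect_eq, THEN spec[of _ "int k"]] False by simp
          ultimately have "t = s1"
            using t(1) s1(1) unfolding Eb_def by (metis of_int_of_nat_eq)
          then show "i \<in> blk L s1" using t by simp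
        qed
      next
        show "blk L s1 \<subseteq> {i\<in>I. D i = d}"
        proof
          fix i assume i: "i \<in> blk L s1"
          have "i \<in> I" using blk_sub[OF bw s1(1)] i unfolding I_def by blast
          moreover have "D i = d" using Ddiag_blk[OF s1(1) i] ds unfolding D_def by simp
          ultimately show "i \<in> {i\<in>I. D i = d}" by simp
        qed
      qed
      moreover have "card {x. is_eigenvalue_on (blk L s1) Wd x} = L s1"
        using A5 s1(1) by blast
      ultimately show ?thesis using card_blk[of s1 L] s1(1) by simp
    qed
  qed
  let ?P = "\<lambda>d \<epsilon>. \<forall>\<mu> v w. eigp I D Wd \<epsilon> \<mu> v \<longrightarrow> eigp I D Wd \<epsilon> \<mu> w \<longrightarrow>
            (\<exists>j\<in>I. v j \<noteq> 0) \<longrightarrow> cmod (\<mu> - d) \<le> \<epsilon> * Kc I Wd \<longrightarrow>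
            (\<exists>a. \<forall>i\<in>I. w i = a * v i)"
  have evall: "eventually (\<lambda>\<epsilon>. \<forall>d\<in>D ` I. ?P d \<epsilon>) (at_right 0)"
  proof (rule eventually_ball_finite)
    show "finite (D ` I)" using fin by simp
    show "\<forall>d\<in>D ` I. eventually (\<lambda>\<epsilon>. ?P d \<epsilon>) (at_right 0)"
    proof
      fix d assume d: "d \<in> D ` I"
      show "eventually (\<lambda>\<epsilon>. ?P d \<epsilon>) (at_right 0)"
        by (rule cluster_ev[OF fin Du sym d refl clus[OF d]])
    qed
  qed
  show "eventually (\<lambda>\<epsilon>. cinner N (f \<epsilon> l) (\<lambda>j. Ddiag S k \<beta> L j * cnj (f \<epsilon> m j)) = 0) (at_right 0)"
    using eventually_conj[OF evall eventually_conj[OF assms(6) eventually_at_right_less[of "0::real"]]]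
  proof (rule eventually_mono)
    fix \<epsilon> :: real
    assume H: "(\<forall>d\<in>D ` I. ?P d \<epsilon>) \<and> unit_eigenbasis N (Pmat S k \<beta> L Wd \<epsilon>) (f \<epsilon>) \<and> 0 < \<epsilon>"
    have Hall: "\<forall>d\<in>D ` I. ?P d \<epsilon>" using H[THEN conjunct1] .
    have B: "unit_eigenbasis N (Pmat S k \<beta> L Wd \<epsilon>) (f \<epsilon>)" using H[THEN conjunct2, THEN conjunct1] .
    have eps: "0 < \<epsilon>" using H[THEN conjunct2, THEN conjunct2] .
    obtain \<mu>l where el: "\<forall>i\<in>{1..N}. (\<Sum>j=1..N. Pmat S k \<beta> L Wd \<epsilon> i j * f \<epsilon> l j) = \<mu>l * f \<epsilon> l i"
      using B l unfolding unit_eigenbasis_def by blast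
    obtain \<mu>m where em: "\<forall>i\<in>{1..N}. (\<Sum>j=1..N. Pmat S k \<beta> L Wd \<epsilon> i j * f \<epsilon> m j) = \<mu>m * f \<epsilon> m i"
      using B m unfolding unit_eigenbasis_def by blast
    have pl: "eigp I D Wd \<epsilon> \<mu>l (f \<epsilon> l)" unfolding I_def D_def by (rule pmat_eigp[OF el])
    have pm: "eigp I D Wd \<epsilon> \<mu>m (f \<epsilon> m)" unfolding I_def D_def by (rule pmat_eigp[OF em])
    have vnz: "\<exists>j\<in>I. f \<epsilon> l j \<noteq> 0"
    proof (rule ccontr)
      assume "\<not> (\<exists>j\<in>I. f \<epsilon> l j \<noteq> 0)"
      then have "(\<Sum>j=1..N. (cmod (f \<epsilon> l j))^2) = 0" unfolding I_def by simp
      then show False using B l unfolding unit_eigenbasis_def by auto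
    qed
    have ne: "\<mu>l \<noteq> \<mu>m"
    proof
      assume eq: "\<mu>l = \<mu>m"
      define M where "M = Max ((\<lambda>j. cmod (f \<epsilon> l j)) ` I)"
      have Ine: "I \<noteq> {}" using l unfolding I_def by auto
      have "M \<in> (\<lambda>j. cmod (f \<epsilon> l j)) ` I" unfolding M_def using fin Ine by (intro Max_in) auto
      then obtain js where js: "js \<in> I" "cmod (f \<epsilon> l js) = M" by auto
      have Mmax: "\<forall>j\<in>I. cmod (f \<epsilon> l j) \<le> M" unfolding M_def using fin by auto
      have Mpos: "M > 0"
      proof -
        obtain j where "j \<in> I" "f \<epsilon> l j \<noteq> 0" using vnz by auto
        then show ?thesis using Mmax by (meson norm_ge_zero order_less_le_trans zero_less_norm_iff)
      qed
      have "cmod (D js - \<mu>l) * M \<le> \<epsilon> * Kc I Wd * M"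
        using eq_bound[OF fin Du pl js(1) Mmax] eps js(2) by simp
      then have "cmod (D js - \<mu>l) \<le> \<epsilon> * Kc I Wd" using Mpos by simp
      then have near: "cmod (\<mu>l - D js) \<le> \<epsilon> * Kc I Wd" by (simp add: norm_minus_commute)
      have PD: "?P (D js) \<epsilon>" using bspec[OF Hall imageI[OF js(1)]] .
      have "\<exists>a. \<forall>i\<in>I. f \<epsilon> m i = a * f \<epsilon> l i"
        using PD[rule_format, OF pl, of "f \<epsilon> m"] pm eq vnz near by simp
      then obtain a where a: "\<forall>i\<in>I. f \<epsilon> m i = a * f \<epsilon> l i" by blast
      define c where "c x = (if x = l then a else if x = m then -1 else 0)" for x
      have "\<forall>j\<in>{1..N}. (\<Sum>x=1..N. c x * f \<epsilon> x j) = 0"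
      proof
        fix j assume j: "j \<in> {1..N}"
        have "(\<Sum>x=1..N. c x * f \<epsilon> x j) = (\<Sum>x=1..N. (if x = l then a * f \<epsilon> l j else 0) + (if x = m then - f \<epsilon> m j else 0))"
          unfolding c_def using lm by (intro sum.cong) auto
        also have "\<dots> = a * f \<epsilon> l j - f \<epsilon> m j" using l m by (simp add: sum.distrib)
        also have "\<dots> = 0" using a j unfolding I_def by simp
        finally show "(\<Sum>x=1..N. c x * f \<epsilon> x j) = 0" .
      qed
      then have "c m = 0" using B m unfolding unit_eigenbasis_def by blast
      then show False using lm unfolding c_def by simp
    qed
    have "(\<Sum>j\<in>I. f \<epsilon> l j * cnj (D j * cnj (f \<epsilon> m j))) = 0"
      by (rule biorth[OF fin Du sym pl pm ne])
    then show "cinner N (f \<epsilon> l) (\<lambda>j. Ddiag S k \<beta> L j * cnj (f \<epsilon> m j)) = 0"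
      unfolding cinner_def I_def D_def by simp
  qed
qed

end
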